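(* Let $G$ be a finite simple graph with edge weight function $w$ and vertex weight function $w_1$, let $u\in V(G)$ and let $\theta$ be a real number. Then $$\mathrm{mult}(\theta,G)-1\le \mathrm{mult}(\theta,G\setminus u)\le \mathrm{mult}(\theta,G)+1.$$
   Context: An edge weight function $w$ assigns a nonzero complex number to each edge; a vertex weight function $w_1$ assigns a real number (possibly $0$) to each vertex; subgraphs carry restricted weights; $G\setminus u$ deletes $u$ and its incident edges. For $A\subseteq E(G)$, $w(A)=\prod_{e\in A}w(e)$. $\mu_w(G,x)=\sum_{M}(-1)^{|M|}|w(M)|^2x^{n-2|M|}$ over all matchings $M$ (including empty). $\eta_{(w,w_1)}(G,x)=\sum_{S\subseteq V(G)}(-1)^{|V(G)\setminus S|}\big(\prod_{v\in V(G)\setminus S}w_1(v)\big)\mu_w(G[S],x)$ with $G[S]$ the induced subgraph; $\mu_w,\eta_{(w,w_1)}$ of the empty graph equal $1$. $\mathrm{mult}(\theta,H)$ is the multiplicity of $\theta$ as a root of $\eta_{(w,w_1)}(H,x)$ ($0$ if not a root). *)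

theory Defs
  imports Complex_Main "HOL-Computational_Algebra.Polynomial"
begin

definition simple_graph :: "'a set \<Rightarrow> 'a set set \<Rightarrow> bool" where
  "simple_graph V E \<longleftrightarrow> finite V \<and> (\<forall>e\<in>E. e \<subseteq> V \<and> card e = 2)"

definition matching :: "'a set set \<Rightarrow> 'a set set \<Rightarrow> bool" where
  "matching E M \<longleftrightarrow> M \<subseteq> E \<and> (\<forall>e\<in>M. \<forall>f\<in>M. e \<noteq> f \<longrightarrow> e \<inter> f = {})"

definition induced_edges :: "'a set set \<Rightarrow> 'a set \<Rightarrow> 'a set set" where
  "induced_edges E S = {e\<in>E. e \<subseteq> S}"

definition delete_vertex_edges :: "'a set set \<Rightarrow> 'a \<Rightarrow> 'a set set" where
  "delete_vertex_edges E u = {e\<in>E. u \<notin> e}"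

definition mu_poly :: "'a set \<Rightarrow> 'a set set \<Rightarrow> ('a set \<Rightarrow> complex) \<Rightarrow> real poly" where
  "mu_poly V E w = (\<Sum>M\<in>{M. matching E M}.
     smult ((-1) ^ card M * (\<Prod>e\<in>M. cmod (w e)) ^ 2) (monom 1 (card V - 2 * card M)))"

definition eta_poly :: "'a set \<Rightarrow> 'a set set \<Rightarrow> ('a set \<Rightarrow> complex) \<Rightarrow> ('a \<Rightarrow> real) \<Rightarrow> real poly" where
  "eta_poly V E w w1 = (\<Sum>S\<in>Pow V.
     smult ((-1) ^ card (V - S) * (\<Prod>v\<in>V - S. w1 v)) (mu_poly S (induced_edges E S) w))"

definition mult :: "real \<Rightarrow> 'a set \<Rightarrow> 'a set set \<Rightarrow> ('a set \<Rightarrow> complex) \<Rightarrow> ('a \<Rightarrow> real) \<Rightarrow> nat" where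
  "mult \<theta> V E w w1 = order \<theta> (eta_poly V E w w1)"

end

theory Submission
  imports Defs
begin


lemma ind_finite: "finite S \<Longrightarrow> finite (induced_edges E S)"
  by (rule finite_subset[of _ "Pow S"]) (auto simp: induced_edges_def)

lemma matchings_finite: "finite F \<Longrightarrow> finite {M. matching F M}"
  by (rule finite_subset[of _ "Pow F"]) (auto simp: matching_def)

lemma matching_card:
  assumes "finite S" "\<forall>e\<in>E. card e = 2" "matching (induced_edges E S) M"
  shows "2 * card M \<le> card S"
proof -
  have M: "M \<subseteq> induced_edges E S" using assms(3) by (auto simp: matching_def)
  have fM: "finite M" using M ind_finite[OF assms(1)] finite_subset by blast
  have "card (\<Union>M) = sum card M"
    apply (rule card_Union_disjoint)
    using assms(3) M assms(1) unfolding matching_def pairwise_def disjnt_def induced_edges_def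
    by (auto intro: finite_subset[of _ S])
  also have "\<dots> = 2 * card M" using M assms(2) by (simp add: induced_edges_def subset_iff)
  finally have "card (\<Union>M) = 2 * card M" .
  moreover have "\<Union>M \<subseteq> S" using M by (auto simp: induced_edges_def)
  ultimately show ?thesis by (metis assms(1) card_mono)
qed

lemma smult_sum_right: "smult a (\<Sum>i\<in>S. f i) = (\<Sum>i\<in>S. smult a (f i))"
  by (induction S rule: infinite_finite_induct) (auto simp: smult_add_right)

definition mterm :: "'a set \<Rightarrow> ('a set \<Rightarrow> complex) \<Rightarrow> 'a set set \<Rightarrow> real poly" where
  "mterm S w M = smult ((-1) ^ card M * (\<Prod>e\<in>M. cmod (w e)) ^ 2) (monom 1 (card S - 2 * card M))"

lemma mu_mterm: "mu_poly S F w = (\<Sum>M\<in>{M. matching F M}. mterm S w M)"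
  by (simp add: mu_poly_def mterm_def)

lemma mterm_A:
  assumes "finite S" "u \<in> S" "\<forall>e\<in>E. card e = 2" "matching (induced_edges E (S - {u})) M"
  shows "mterm S w M = [:0,1:] * mterm (S - {u}) w M"
proof -
  have "2 * card M \<le> card (S - {u})" using matching_card[OF _ assms(3,4)] assms(1) by simp
  moreover have "card (S - {u}) = card S - 1" using assms by simp
  moreover have "card S > 0" using assms(1,2) card_gt_0_iff by blast
  ultimately have "card S - 2 * card M = Suc (card (S - {u}) - 2 * card M)" by linarith
  then show ?thesis unfolding mterm_def
    by (simp add: monom_Suc mult_smult_right)
qed

lemma mterm_B:
  assumes "finite S" "u \<in> S" "v \<in> S" "u \<noteq> v" "finite M" "{u,v} \<notin> M"
  shows "mterm S w (insert {u,v} M) = - smult ((cmod (w {u,v}))^2) (mterm (S - {u} - {v}) w M)"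
proof -
  have c: "card (S - {u} - {v}) = card S - 2" using assms by (simp add: card_Diff_singleton_if)
  have "card S - 2 * Suc (card M) = card S - 2 - 2 * card M" by simp
  then show ?thesis unfolding mterm_def using assms c
    by (simp add: power_mult_distrib algebra_simps)
qed

lemma mu_rec:
  assumes fin: "finite S" and uS: "u \<in> S" and c2: "\<forall>e\<in>E. card e = 2"
  shows "mu_poly S (induced_edges E S) w =
    [:0,1:] * mu_poly (S - {u}) (induced_edges E (S - {u})) w
    - (\<Sum>v\<in>{v\<in>S - {u}. {u,v} \<in> E}. smult ((cmod (w {u,v}))^2)
          (mu_poly (S - {u} - {v}) (induced_edges E (S - {u} - {v})) w))"
proof -
  define N where "N = {v\<in>S - {u}. {u,v} \<in> E}"
  define Ms where "Ms = {M. matching (induced_edges E S) M}"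
  define A where "A = {M. matching (induced_edges E (S - {u})) M}"
  define B where "B = (\<lambda>v. {M. matching (induced_edges E (S - {u} - {v})) M})"
  have finN: "finite N" using fin by (simp add: N_def)
  have finMs: "finite Ms" unfolding Ms_def by (rule matchings_finite[OF ind_finite[OF fin]])
  have finA: "finite A" unfolding A_def by (rule matchings_finite[OF ind_finite]) (use fin in simp)
  have finB: "finite (B v)" for v unfolding B_def by (rule matchings_finite[OF ind_finite]) (use fin in simp)
  have BM: "M \<in> B v \<Longrightarrow> finite M \<and> {u,v} \<notin> M" for M v
  proof -
    assume "M \<in> B v"
    then have M: "M \<subseteq> induced_edges E (S - {u} - {v})" by (auto simp: B_def matching_def)
    have "finite M" using finite_subset[OF M ind_finite[of "S - {u} - {v}" E]] fin by simp
    moreover have "{u,v} \<notin> M" using M by (auto simp: induced_edges_def)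
    ultimately show ?thesis by simp
  qed
  have Ms_eq: "Ms = A \<union> (\<Union>v\<in>N. insert {u,v} ` B v)"
  proof (intro set_eqI iffI)
    fix M assume M: "M \<in> Ms"
    show "M \<in> A \<union> (\<Union>v\<in>N. insert {u,v} ` B v)"
    proof (cases "\<exists>e\<in>M. u \<in> e")
      case False
      then have "M \<in> A" using M by (auto simp: A_def Ms_def matching_def induced_edges_def)
      then show ?thesis by blast
    next
      case True
      then obtain e where e: "e \<in> M" "u \<in> e" by blast
      have eE: "e \<in> E" "e \<subseteq> S" using e M by (auto simp: Ms_def matching_def induced_edges_def)
      then obtain x y where xy: "e = {x,y}" "x \<noteq> y" using card_2_iff[THEN iffD1, OF c2[rule_format, OF eE(1)]] by blast
      obtain v where v: "e = {u,v}" "v \<noteq> u"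
      proof (cases "u = x")
        case True then show ?thesis using that xy by blast
      next
        case False then have "u = y" using e(2) xy by blast
        then show ?thesis using that xy by (metis insert_commute)
      qed
      have uvE: "{u,v} \<in> E" using eE(1) unfolding v(1) .
      have vS: "v \<in> S" using eE(2) unfolding v(1) by simp
      have vN: "v \<in> N" using uvE vS v(2) unfolding N_def by simp
      have sub: "M - {{u,v}} \<subseteq> induced_edges E (S - {u} - {v})"
      proof
        fix f assume f: "f \<in> M - {{u,v}}"
        have eM: "{u,v} \<in> M" using e(1) unfolding v(1) .
        have fM: "f \<noteq> {u,v}" "f \<in> M" using f by auto
        have Md: "\<forall>e\<in>M. \<forall>f\<in>M. e \<noteq> f \<longrightarrow> e \<inter> f = {}" using M unfolding Ms_def matching_def by simp
        have "f \<inter> {u,v} = {}" using Md[rule_format, OF fM(2) eM fM(1)] .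
        moreover have "f \<in> E" "f \<subseteq> S" using f M by (auto simp: Ms_def matching_def induced_edges_def)
        ultimately show "f \<in> induced_edges E (S - {u} - {v})" by (auto simp: induced_edges_def)
      qed
      have "M - {{u,v}} \<in> B v"
        using sub M unfolding B_def Ms_def matching_def by blast
      moreover have "M = insert {u,v} (M - {{u,v}})" using e(1) unfolding v(1) by auto
      ultimately show ?thesis using vN by blast
    qed
  next
    fix M assume "M \<in> A \<union> (\<Union>v\<in>N. insert {u,v} ` B v)"
    then consider "M \<in> A" | v M' where "v \<in> N" "M' \<in> B v" "M = insert {u,v} M'" by blast
    then show "M \<in> Ms"
    proof cases
      case 1 then show ?thesis by (auto simp: A_def Ms_def matching_def induced_edges_def)
    next
      case 2
      have "{u,v} \<in> induced_edges E S" using 2(1) uS by (auto simp: N_def induced_edges_def)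
      moreover have "M' \<subseteq> induced_edges E S" "\<forall>f\<in>M'. f \<inter> {u,v} = {}"
        using 2(2) by (auto simp: B_def matching_def induced_edges_def)
      moreover have "\<forall>e\<in>M'. \<forall>f\<in>M'. e \<noteq> f \<longrightarrow> e \<inter> f = {}"
        using 2(2) by (auto simp: B_def matching_def)
      ultimately show ?thesis unfolding Ms_def matching_def 2(3) by blast
    qed
  qed
  have disjAB: "A \<inter> (\<Union>v\<in>N. insert {u,v} ` B v) = {}"
    by (auto simp: A_def matching_def induced_edges_def)
  have disjB: "\<forall>v\<in>N. \<forall>v'\<in>N. v \<noteq> v' \<longrightarrow> insert {u,v} ` B v \<inter> insert {u,v'} ` B v' = {}"
  proof (intro ballI impI)
    fix v v' assume vv: "v \<in> N" "v' \<in> N" "v \<noteq> v'"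
    show "insert {u,v} ` B v \<inter> insert {u,v'} ` B v' = {}"
    proof (rule ccontr)
      assume "insert {u,v} ` B v \<inter> insert {u,v'} ` B v' \<noteq> {}"
      then obtain M where M: "M \<in> insert {u,v} ` B v" "M \<in> insert {u,v'} ` B v'" by blast
      from M(1) obtain M1 where M1: "M1 \<in> B v" "M = insert {u,v} M1" by blast
      from M(2) obtain M2 where M2: "M = insert {u,v'} M2" by blast
      have "{u,v'} \<in> M" unfolding M2 by simp
      then have "{u,v'} \<in> insert {u,v} M1" unfolding M1(2) .
      moreover have "{u,v'} \<noteq> {u,v}" using vv by (auto simp: doubleton_eq_iff)
      ultimately have "{u,v'} \<in> M1" by simp
      then show False using M1(1) by (auto simp: B_def matching_def induced_edges_def)
    qed
  qed
  have sumMs: "(\<Sum>M\<in>Ms. mterm S w M) = (\<Sum>M\<in>A. mterm S w M)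
      + (\<Sum>v\<in>N. \<Sum>M\<in>insert {u,v} ` B v. mterm S w M)"
    unfolding Ms_eq
    by (subst sum.union_disjoint) (use finA finN finB disjAB disjB in \<open>auto intro!: sum.UNION_disjoint\<close>)
  have sA: "(\<Sum>M\<in>A. mterm S w M) = [:0,1:] * mu_poly (S - {u}) (induced_edges E (S - {u})) w"
    unfolding mu_mterm sum_distrib_left A_def
    by (rule sum.cong[OF refl], rule mterm_A[OF fin uS c2]) simp
  have sB: "(\<Sum>M\<in>insert {u,v} ` B v. mterm S w M) = - smult ((cmod (w {u,v}))^2)
          (mu_poly (S - {u} - {v}) (induced_edges E (S - {u} - {v})) w)" if vN: "v \<in> N" for v
  proof -
    have "inj_on (insert {u,v}) (B v)" using BM unfolding inj_on_def
      by (metis insert_absorb insert_ident)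
    then have "(\<Sum>M\<in>insert {u,v} ` B v. mterm S w M) = (\<Sum>M\<in>B v. mterm S w (insert {u,v} M))"
      by (simp add: sum.reindex)
    also have "\<dots> = (\<Sum>M\<in>B v. - smult ((cmod (w {u,v}))^2) (mterm (S - {u} - {v}) w M))"
      by (rule sum.cong[OF refl], rule mterm_B) (use vN BM fin uS in \<open>auto simp: N_def\<close>)
    also have "\<dots> = - smult ((cmod (w {u,v}))^2)
          (mu_poly (S - {u} - {v}) (induced_edges E (S - {u} - {v})) w)"
      by (simp add: mu_mterm B_def smult_sum_right sum_negf)
    finally show ?thesis .
  qed
  show ?thesis
    unfolding N_def[symmetric] mu_mterm[of S] Ms_def[symmetric] sumMs sA
    using sB by (simp add: sum_negf)
qed

definition cf :: "'a set \<Rightarrow> ('a \<Rightarrow> real) \<Rightarrow> 'a set \<Rightarrow> real" where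
  "cf V w1 S = (-1) ^ card (V - S) * (\<Prod>v\<in>V - S. w1 v)"

lemma eta_cf: "eta_poly V E w w1 = (\<Sum>S\<in>Pow V. smult (cf V w1 S) (mu_poly S (induced_edges E S) w))"
  by (simp add: eta_poly_def cf_def)

lemma eta_rec:
  assumes fin: "finite V" and uV: "u \<in> V" and c2: "\<forall>e\<in>E. card e = 2"
  shows "eta_poly V E w w1 = [:- w1 u, 1:] * eta_poly (V - {u}) E w w1
    - (\<Sum>v\<in>{v\<in>V - {u}. {u,v} \<in> E}. smult ((cmod (w {u,v}))^2) (eta_poly (V - {u} - {v}) E w w1))"
proof -
  define V' where "V' = V - {u}"
  define N where "N = {v\<in>V'. {u,v} \<in> E}"
  define mu where "mu = (\<lambda>S. mu_poly S (induced_edges E S) w)"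
  define c where "c = (\<lambda>v. (cmod (w {u,v}))^2)"
  have finV': "finite V'" using fin by (simp add: V'_def)
  have uV': "u \<notin> V'" by (simp add: V'_def)
  have VV: "V = insert u V'" using uV by (auto simp: V'_def)
  have finN: "finite N" using finV' by (simp add: N_def)
  have PowV: "Pow V = Pow V' \<union> insert u ` Pow V'" unfolding VV Pow_insert ..
  have disj: "Pow V' \<inter> insert u ` Pow V' = {}" using uV' by auto
  have inj: "inj_on (insert u) (Pow V')" using uV' unfolding inj_on_def by (metis Pow_iff insert_ident subsetD)
  have eq1: "(\<Sum>S\<in>Pow V'. smult (cf V w1 S) (mu S)) = smult (- w1 u) (eta_poly V' E w w1)"
  proof -
    have "cf V w1 S = - w1 u * cf V' w1 S" if "S \<in> Pow V'" for S
    proof -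
      have "V - S = insert u (V' - S)" using that uV by (auto simp: V'_def)
      moreover have "finite (V' - S)" "u \<notin> V' - S" using finV' uV' by auto
      ultimately show ?thesis by (simp add: cf_def)
    qed
    then show ?thesis unfolding eta_cf smult_sum_right mu_def
      by (intro sum.cong refl) simp
  qed
  have mu_ins: "mu (insert u T) = [:0,1:] * mu T - (\<Sum>v\<in>{v\<in>N. v \<in> T}. smult (c v) (mu (T - {v})))"
    if T: "T \<in> Pow V'" for T
  proof -
    have uT: "u \<notin> T" using T uV' by auto
    have fT: "finite (insert u T)" using T finV' finite_subset by auto
    have e1: "insert u T - {u} = T" using uT by simp
    have e2: "{v\<in>insert u T - {u}. {u,v} \<in> E} = {v\<in>N. v \<in> T}" using T uT by (auto simp: N_def)
    have e3: "{v. v \<in> T \<and> {u,v} \<in> E} = {v. v \<in> N \<and> v \<in> T}" using T uT by (auto simp: N_def)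
    show ?thesis unfolding mu_def mu_rec[OF fT insertI1 c2] e1 c_def using e3 by simp
  qed
  have eq2: "(\<Sum>S\<in>insert u ` Pow V'. smult (cf V w1 S) (mu S))
     = [:0,1:] * eta_poly V' E w w1 - (\<Sum>T\<in>Pow V'. \<Sum>v\<in>{v\<in>N. v \<in> T}. smult (cf V' w1 T * c v) (mu (T - {v})))"
  proof -
    have cfi: "cf V w1 (insert u T) = cf V' w1 T" if "T \<in> Pow V'" for T
    proof -
      have "V - insert u T = V' - T" using that by (auto simp: V'_def)
      then show ?thesis by (simp add: cf_def)
    qed
    have "(\<Sum>S\<in>insert u ` Pow V'. smult (cf V w1 S) (mu S)) = (\<Sum>T\<in>Pow V'. smult (cf V' w1 T) (mu (insert u T)))"
      by (simp add: sum.reindex[OF inj] cfi)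
    also have "\<dots> = (\<Sum>T\<in>Pow V'. [:0,1:] * smult (cf V' w1 T) (mu T)
          - (\<Sum>v\<in>{v\<in>N. v \<in> T}. smult (cf V' w1 T * c v) (mu (T - {v}))))"
      by (intro sum.cong refl) (simp add: mu_ins smult_diff_right smult_sum_right mult_smult_right)
    also have "\<dots> = [:0,1:] * eta_poly V' E w w1 - (\<Sum>T\<in>Pow V'. \<Sum>v\<in>{v\<in>N. v \<in> T}. smult (cf V' w1 T * c v) (mu (T - {v})))"
      by (simp add: sum_subtractf eta_cf sum_distrib_left mu_def)
    finally show ?thesis .
  qed
  have eq3: "(\<Sum>T\<in>Pow V'. \<Sum>v\<in>{v\<in>N. v \<in> T}. smult (cf V' w1 T * c v) (mu (T - {v})))
      = (\<Sum>v\<in>N. smult (c v) (eta_poly (V' - {v}) E w w1))"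
  proof -
    have "(\<Sum>T\<in>Pow V'. \<Sum>v\<in>{v\<in>N. v \<in> T}. smult (cf V' w1 T * c v) (mu (T - {v})))
        = (\<Sum>v\<in>N. \<Sum>T\<in>{T\<in>Pow V'. v \<in> T}. smult (cf V' w1 T * c v) (mu (T - {v})))"
      by (rule sum.swap_restrict) (use finV' finN in auto)
    also have "\<dots> = (\<Sum>v\<in>N. smult (c v) (eta_poly (V' - {v}) E w w1))"
    proof (rule sum.cong[OF refl])
      fix v assume vN: "v \<in> N"
      have vV': "v \<in> V'" using vN by (simp add: N_def)
      have setq: "{T\<in>Pow V'. v \<in> T} = insert v ` Pow (V' - {v})"
      proof
        show "{T\<in>Pow V'. v \<in> T} \<subseteq> insert v ` Pow (V' - {v})"
        proof
          fix T assume "T \<in> {T\<in>Pow V'. v \<in> T}"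
          then have "T = insert v (T - {v})" "T - {v} \<in> Pow (V' - {v})" by auto
          then show "T \<in> insert v ` Pow (V' - {v})" by (rule image_eqI)
        qed
        show "insert v ` Pow (V' - {v}) \<subseteq> {T\<in>Pow V'. v \<in> T}" using vV' by auto
      qed
      have injv: "inj_on (insert v) (Pow (V' - {v}))"
      proof (rule inj_onI)
        fix A B assume AB: "A \<in> Pow (V' - {v})" "B \<in> Pow (V' - {v})" "insert v A = insert v B"
        have "A = insert v A - {v}" "B = insert v B - {v}" using AB(1,2) by auto
        then show "A = B" using AB(3) by simp
      qed
      have "(\<Sum>T\<in>{T\<in>Pow V'. v \<in> T}. smult (cf V' w1 T * c v) (mu (T - {v})))
          = (\<Sum>R\<in>Pow (V' - {v}). smult (cf V' w1 (insert v R) * c v) (mu (insert v R - {v})))"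
        unfolding setq by (simp add: sum.reindex[OF injv])
      also have "\<dots> = (\<Sum>R\<in>Pow (V' - {v}). smult (c v) (smult (cf (V' - {v}) w1 R) (mu R)))"
      proof (intro sum.cong refl)
        fix R assume R: "R \<in> Pow (V' - {v})"
        have "V' - insert v R = V' - {v} - R" by auto
        moreover have "insert v R - {v} = R" using R by auto
        ultimately show "smult (cf V' w1 (insert v R) * c v) (mu (insert v R - {v})) = smult (c v) (smult (cf (V' - {v}) w1 R) (mu R))"
          by (simp add: cf_def mult.commute)
      qed
      also have "\<dots> = smult (c v) (eta_poly (V' - {v}) E w w1)"
        by (simp add: eta_cf smult_sum_right mu_def)
      finally show "(\<Sum>T\<in>{T\<in>Pow V'. v \<in> T}. smult (cf V' w1 T * c v) (mu (T - {v}))) = smult (c v) (eta_poly (V' - {v}) E w w1)" .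
    qed
    finally show ?thesis .
  qed
  have "eta_poly V E w w1 = (\<Sum>S\<in>Pow V'. smult (cf V w1 S) (mu S)) + (\<Sum>S\<in>insert u ` Pow V'. smult (cf V w1 S) (mu S))"
    unfolding eta_cf PowV mu_def
    by (rule sum.union_disjoint) (use finV' disj in auto)
  also have "\<dots> = [:- w1 u, 1:] * eta_poly V' E w w1 - (\<Sum>v\<in>N. smult (c v) (eta_poly (V' - {v}) E w w1))"
    unfolding eq1 eq2 eq3 by (simp add: algebra_simps smult_add_left)
  finally show ?thesis unfolding V'_def N_def c_def .
qed



lemma cont_neg:
  fixes F :: "real poly"
  assumes "poly F t < 0"
  shows "\<exists>x. x \<noteq> t \<and> poly F x < 0"
proof -
  have "((\<lambda>x. poly F x) \<longlongrightarrow> poly F t) (at t)" using poly_isCont[where p=F and x=t] by (simp add: isCont_def)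
  then have "eventually (\<lambda>x. poly F x < 0) (at t)" using assms by (rule order_tendstoD(2))
  then obtain d where d: "d > 0" "\<forall>x. x \<noteq> t \<and> dist x t < d \<longrightarrow> poly F x < 0"
    unfolding eventually_at by auto
  have "t + d/2 \<noteq> t" "dist (t + d/2) t < d" using d(1) by (auto simp: dist_real_def)
  then show ?thesis using d(2) by blast
qed

lemma lemmaA:
  fixes f R :: "real poly"
  assumes f: "f \<noteq> 0" and R: "\<forall>x. poly R x \<ge> 0"
  shows "\<not> [:-t,1:] ^ (2 * order t f + 1) dvd (f^2 + R)"
proof
  define k where "k = order t f"
  define p where "p = [:-t,1:]"
  obtain f1 where f1: "f = p ^ k * f1" "\<not> p dvd f1" using order_decomp[OF f, of t] by (auto simp: k_def p_def)
  have f1t: "poly f1 t \<noteq> 0" using f1(2) by (simp add: poly_eq_0_iff_dvd p_def)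
  assume "[:-t,1:] ^ (2 * order t f + 1) dvd (f^2 + R)"
  then obtain h where h: "f^2 + R = p ^ (2*k+1) * h" unfolding k_def p_def by (auto elim: dvdE)
  define F where "F = p * h - f1^2"
  have RF: "R = p^(2*k) * F"
  proof -
    have "R = p ^ (2*k+1) * h - f^2" using h by (simp add: algebra_simps)
    also have "\<dots> = p^(2*k) * F" unfolding F_def f1(1)
      by (simp add: algebra_simps power_mult_distrib power_add power_mult[symmetric] mult.commute[of 2 k])
    finally show ?thesis .
  qed
  have "poly F t < 0" using f1t by (simp add: F_def p_def)
  then obtain x where x: "x \<noteq> t" "poly F x < 0" using cont_neg by blast
  have "poly (p^(2*k)) x > 0" using x(1) by (simp add: p_def power_mult)
  then have "poly R x < 0" unfolding RF using x(2) by (simp add: mult_pos_neg)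
  then show False using R by (meson not_less)
qed

lemma pderiv_sum: "pderiv (\<Sum>i\<in>S. f i) = (\<Sum>i\<in>S. pderiv (f i))"
  by (induction S rule: infinite_finite_induct) (auto simp: pderiv_add)

lemma dvd_pderiv:
  fixes q :: "real poly"
  assumes "p ^ n dvd q"
  shows "p ^ (n - 1) dvd pderiv q"
proof -
  obtain h where h: "q = p ^ n * h" using assms by (auto elim: dvdE)
  have "p ^ (n - 1) dvd pderiv (p ^ n)"
  proof (cases n)
    case 0 then show ?thesis by simp
  next
    case (Suc m)
    have "pderiv (p ^ Suc m) = smult (of_nat (Suc m)) (p ^ m) * pderiv p" by (rule pderiv_power_Suc)
    moreover have "p ^ m dvd smult (of_nat (Suc m)) (p ^ m * pderiv p)"
      by (rule dvd_smult) simp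
    ultimately show ?thesis using Suc by (simp del: power_Suc)
  qed
  moreover have "p ^ (n - 1) dvd p ^ n" by (rule le_imp_power_dvd) simp
  ultimately show ?thesis unfolding h pderiv_mult by (simp add: dvd_add dvd_mult2 dvd_mult)
qed



lemma eta_empty:
  assumes "\<forall>e\<in>E. card e = 2"
  shows "eta_poly {} E w w1 = 1"
proof -
  have "induced_edges E {} = {}" using assms by (force simp: induced_edges_def)
  moreover have "Collect (matching ({}::'a set set)) = {{}}" by (auto simp: matching_def)
  ultimately show ?thesis by (simp add: eta_poly_def mu_poly_def)
qed

lemma eta_deg:
  assumes "finite V" "\<forall>e\<in>E. card e = 2"
  shows "degree (eta_poly V E w w1) \<le> card V \<and> coeff (eta_poly V E w w1) (card V) = 1"
  using assms(1)
proof (induction "card V" arbitrary: V rule: less_induct)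
  case less
  show ?case
  proof (cases "V = {}")
    case True then show ?thesis using eta_empty[OF assms(2)] by simp
  next
    case False
    then obtain u where uV: "u \<in> V" by blast
    define n where "n = card V"
    define f where "f = eta_poly (V - {u}) E w w1"
    have n1: "n \<ge> 1" using less.prems uV by (simp add: n_def card_gt_0_iff Suc_le_eq) blast
    have cV': "card (V - {u}) = n - 1" using less.prems uV by (simp add: n_def)
    have IH1: "degree f \<le> n - 1 \<and> coeff f (n - 1) = 1"
      using less.hyps[of "V - {u}"] less.prems uV cV' n1 by (simp add: f_def n_def)
    have IH2: "degree (eta_poly (V - {u} - {v}) E w w1) \<le> n - 1" if "v \<in> V - {u}" for v
    proof -
      have c: "card (V - {u} - {v}) = n - 2" using less.prems uV that cV' by simp
      have "degree (eta_poly (V - {u} - {v}) E w w1) \<le> card (V - {u} - {v})"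
        using less.hyps[of "V - {u} - {v}"] less.prems uV that n1 by (simp add: card_Diff_singleton_if n_def)
      then show ?thesis using c by simp
    qed
    define S where "S = (\<Sum>v\<in>{v\<in>V - {u}. {u,v} \<in> E}. smult ((cmod (w {u,v}))^2) (eta_poly (V - {u} - {v}) E w w1))"
    have eq: "eta_poly V E w w1 = [:- w1 u, 1:] * f - S"
      unfolding f_def S_def by (rule eta_rec[OF less.prems uV assms(2)])
    have dS: "degree S \<le> n - 1" unfolding S_def
      by (rule degree_sum_le) (use less.prems IH2 in \<open>auto intro: order.trans[OF degree_smult_le]\<close>)
    have dL: "degree ([:- w1 u, 1:] * f) \<le> n"
    proof -
      have "degree ([:- w1 u, 1:] * f) \<le> degree [:- w1 u, 1:] + degree f" by (rule degree_mult_le)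
      moreover have "degree [:- w1 u, 1:] = 1" by simp
      ultimately show ?thesis using IH1 n1 by (simp del: mult_pCons_left) linarith
    qed
    have cS: "coeff S n = 0" using dS n1 by (intro coeff_eq_0) simp
    have cf: "coeff f n = 0" using conjunct1[OF IH1] n1 by (intro coeff_eq_0) linarith
    have cL: "coeff ([:- w1 u, 1:] * f) n = 1"
    proof -
      have "n = Suc (n - 1)" using n1 by simp
      moreover have "[:- w1 u, 1:] * f = smult (- w1 u) f + pCons 0 f" by simp
      ultimately have "coeff ([:- w1 u, 1:] * f) n = - w1 u * coeff f n + coeff f (n - 1)"
        by (metis coeff_add coeff_pCons_Suc coeff_smult)
      then show ?thesis using cf IH1 by simp
    qed
    show ?thesis unfolding eq n_def[symmetric]
      using dS dL cS cL by (simp add: degree_diff_le)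
  qed
qed

lemma eta_nz:
  assumes "finite V" "\<forall>e\<in>E. card e = 2"
  shows "eta_poly V E w w1 \<noteq> 0"
  using eta_deg[OF assms, of w w1] by auto

definition Wp :: "'a set set \<Rightarrow> ('a set \<Rightarrow> complex) \<Rightarrow> ('a \<Rightarrow> real) \<Rightarrow> 'a set \<Rightarrow> 'a \<Rightarrow> real poly" where
  "Wp E w w1 V u = eta_poly (V - {u}) E w w1 * pderiv (eta_poly V E w w1)
      - eta_poly V E w w1 * pderiv (eta_poly (V - {u}) E w w1)"

lemma W_rec:
  assumes fin: "finite V" and uV: "u \<in> V" and c2: "\<forall>e\<in>E. card e = 2"
  shows "Wp E w w1 V u = (eta_poly (V - {u}) E w w1)^2
     + (\<Sum>v\<in>{v\<in>V - {u}. {u,v} \<in> E}. smult ((cmod (w {u,v}))^2) (Wp E w w1 (V - {u}) v))"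
proof -
  define N where "N = {v\<in>V - {u}. {u,v} \<in> E}"
  define c where "c = (\<lambda>v. (cmod (w {u,v}))^2)"
  define f where "f = eta_poly (V - {u}) E w w1"
  define g where "g = eta_poly V E w w1"
  define fv where "fv = (\<lambda>v. eta_poly (V - {u} - {v}) E w w1)"
  define L where "L = [:- w1 u, 1:]"
  define S1 where "S1 = (\<Sum>v\<in>N. smult (c v) (pderiv (fv v)))"
  define S2 where "S2 = (\<Sum>v\<in>N. smult (c v) (fv v))"
  have geq: "g = L * f - S2"
    unfolding g_def L_def f_def S2_def N_def c_def fv_def by (rule eta_rec[OF fin uV c2])
  have pL: "pderiv L = 1" by (simp add: L_def pderiv_pCons)
  have g': "pderiv g = L * pderiv f + f - S1"
    unfolding geq S2_def S1_def by (simp add: pderiv_diff pderiv_mult pL pderiv_sum pderiv_smult)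
  have Ssum: "(\<Sum>v\<in>N. smult (c v) (Wp E w w1 (V - {u}) v)) = S2 * pderiv f - f * S1"
    unfolding Wp_def S1_def S2_def f_def fv_def
    by (simp add: smult_diff_right sum_subtractf sum_distrib_left sum_distrib_right mult_smult_left mult_smult_right)
  have "Wp E w w1 V u = f * pderiv g - g * pderiv f" unfolding Wp_def f_def g_def ..
  also have "\<dots> = f * (L * pderiv f + f - S1) - (L * f - S2) * pderiv f"
    unfolding g' by (simp only: geq)
  also have "\<dots> = f^2 + (S2 * pderiv f - f * S1)"
    by (simp add: algebra_simps power2_eq_square)
  finally have "Wp E w w1 V u = f^2 + (\<Sum>v\<in>N. smult (c v) (Wp E w w1 (V - {u}) v))" unfolding Ssum .
  then show ?thesis unfolding N_def c_def f_def .
qed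

lemma W_nonneg:
  assumes "finite V" "u \<in> V" "\<forall>e\<in>E. card e = 2"
  shows "poly (Wp E w w1 V u) x \<ge> 0"
  using assms(1,2)
proof (induction "card V" arbitrary: V u rule: less_induct)
  case less
  have "\<forall>v\<in>{v\<in>V - {u}. {u,v} \<in> E}. poly (Wp E w w1 (V - {u}) v) x \<ge> 0"
  proof
    fix v assume v: "v \<in> {v\<in>V - {u}. {u,v} \<in> E}"
    have "card V > 0" using less.prems card_gt_0_iff by blast
    then have "card (V - {u}) < card V" using less.prems by simp
    then show "poly (Wp E w w1 (V - {u}) v) x \<ge> 0" using less.hyps[of "V - {u}" v] less.prems v by auto
  qed
  then show ?case unfolding W_rec[OF less.prems assms(3)]
    by (auto simp: poly_sum intro!: add_nonneg_nonneg sum_nonneg mult_nonneg_nonneg)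
qed

lemma pow_dvd_order:
  assumes "n \<le> order t q"
  shows "[:-t,1:] ^ n dvd q"
  using dvd_trans[OF le_imp_power_dvd[OF assms] order_1] .

lemma order_ge:
  assumes "q \<noteq> 0" "[:-t,1:] ^ n dvd q"
  shows "n \<le> order t q"
proof (rule ccontr)
  assume "\<not> n \<le> order t q"
  then have "Suc (order t q) \<le> n" by simp
  then have "[:-t,1:] ^ Suc (order t q) dvd q" using dvd_trans[OF le_imp_power_dvd assms(2)] by blast
  then show False using order_2[OF assms(1)] by blast
qed

lemma main:
  assumes "finite V" "u \<in> V" "\<forall>e\<in>E. card e = 2"
  shows "order t (eta_poly V E w w1) \<le> order t (eta_poly (V - {u}) E w w1) + 1
       \<and> order t (eta_poly (V - {u}) E w w1) \<le> order t (eta_poly V E w w1) + 1"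
  using assms(1,2)
proof (induction "card V" arbitrary: V u rule: less_induct)
  case less
  note fin = less.prems(1) and uV = less.prems(2) and c2 = assms(3)
  define N where "N = {v\<in>V - {u}. {u,v} \<in> E}"
  define c where "c = (\<lambda>v. (cmod (w {u,v}))^2)"
  define f where "f = eta_poly (V - {u}) E w w1"
  define g where "g = eta_poly V E w w1"
  define fv where "fv = (\<lambda>v. eta_poly (V - {u} - {v}) E w w1)"
  define L where "L = [:- w1 u, 1:]"
  define p where "p = [:-t,1:]"
  define k where "k = order t f"
  define m where "m = order t g"
  have finN: "finite N" using fin by (simp add: N_def)
  have fin': "finite (V - {u})" using fin by simp
  have gnz: "g \<noteq> 0" unfolding g_def by (rule eta_nz[OF fin c2])
  have fnz: "f \<noteq> 0" unfolding f_def by (rule eta_nz[OF fin' c2])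
  have geq: "g = L * f - (\<Sum>v\<in>N. smult (c v) (fv v))"
    unfolding g_def L_def f_def N_def c_def fv_def by (rule eta_rec[OF fin uV c2])
  have "card V > 0" using fin uV card_gt_0_iff by blast
  then have lt: "card (V - {u}) < card V" using uV by simp
  have IH: "order t f \<le> order t (fv v) + 1" if "v \<in> N" for v
    using less.hyps[OF lt fin', of v] that by (simp add: N_def f_def fv_def)
  have part1: "k \<le> m + 1"
  proof -
    have "p ^ (k - 1) dvd f" unfolding p_def k_def by (rule pow_dvd_order) simp
    moreover have "p ^ (k - 1) dvd fv v" if "v \<in> N" for v
      unfolding p_def by (rule pow_dvd_order) (use IH[OF that] in \<open>simp add: k_def\<close>)
    ultimately have "p ^ (k - 1) dvd g" unfolding geq
      by (intro dvd_diff dvd_mult dvd_sum dvd_smult) auto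
    then have "k - 1 \<le> m" unfolding m_def p_def by (rule order_ge[OF gnz])
    then show ?thesis by simp
  qed
  have part2: "m \<le> k + 1"
  proof (rule ccontr)
    assume "\<not> m \<le> k + 1"
    then have mk: "m \<ge> k + 2" by simp
    define R where "R = (\<Sum>v\<in>N. smult (c v) (Wp E w w1 (V - {u}) v))"
    have Weq: "Wp E w w1 V u = f^2 + R" unfolding R_def N_def c_def f_def by (rule W_rec[OF fin uV c2])
    have Rnn: "\<forall>x. poly R x \<ge> 0"
    proof
      fix x
      have "poly (Wp E w w1 (V - {u}) v) x \<ge> 0" if "v \<in> N" for v
        using W_nonneg[OF fin' _ c2] that by (auto simp: N_def)
      then show "poly R x \<ge> 0" unfolding R_def c_def
        by (auto simp: poly_sum intro!: sum_nonneg mult_nonneg_nonneg)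
    qed
    have d1: "p ^ k dvd f" unfolding p_def k_def by (rule order_1)
    have d2: "p ^ m dvd g" unfolding p_def m_def by (rule order_1)
    have d3: "p ^ (k - 1) dvd pderiv f" by (rule dvd_pderiv[OF d1])
    have d4: "p ^ (m - 1) dvd pderiv g" by (rule dvd_pderiv[OF d2])
    have a1: "p ^ (k + (m - 1)) dvd f * pderiv g" unfolding power_add by (rule mult_dvd_mono[OF d1 d4])
    have b1: "2 * k + 1 \<le> k + (m - 1)" using mk by linarith
    have e1: "p ^ (2 * k + 1) dvd f * pderiv g" by (rule dvd_trans[OF le_imp_power_dvd[OF b1] a1])
    have a2: "p ^ (m + (k - 1)) dvd g * pderiv f" unfolding power_add by (rule mult_dvd_mono[OF d2 d3])
    have b2: "2 * k + 1 \<le> m + (k - 1)" using mk by linarith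
    have e2: "p ^ (2 * k + 1) dvd g * pderiv f" by (rule dvd_trans[OF le_imp_power_dvd[OF b2] a2])
    have "p ^ (2 * k + 1) dvd Wp E w w1 V u" unfolding Wp_def
      using dvd_diff[OF e1 e2] by (simp only: f_def g_def)
    then have "[:-t,1:] ^ (2 * order t f + 1) dvd (f^2 + R)" unfolding Weq p_def k_def .
    then show False using lemmaA[OF fnz Rnn] by blast
  qed
  show ?case using part1 part2 unfolding k_def m_def f_def g_def by simp
qed


lemma del_eq:
  assumes "u \<notin> V'"
  shows "eta_poly V' (delete_vertex_edges E u) w w1 = eta_poly V' E w w1"
  unfolding eta_poly_def
proof (rule sum.cong[OF refl])
  fix S assume "S \<in> Pow V'"
  then have "induced_edges (delete_vertex_edges E u) S = induced_edges E S"
    using assms by (auto simp: induced_edges_def delete_vertex_edges_def)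
  then show "smult ((-1) ^ card (V' - S) * (\<Prod>v\<in>V' - S. w1 v)) (mu_poly S (induced_edges (delete_vertex_edges E u) S) w)
      = smult ((-1) ^ card (V' - S) * (\<Prod>v\<in>V' - S. w1 v)) (mu_poly S (induced_edges E S) w)" by simp
qed

theorem lemma4p2:
  fixes V :: "'a set" and E :: "'a set set" and w :: "'a set \<Rightarrow> complex"
    and w1 :: "'a \<Rightarrow> real" and u :: 'a and \<theta> :: real
  assumes "simple_graph V E"
    and "\<forall>e\<in>E. w e \<noteq> 0"
    and "u \<in> V"
  shows "int (mult \<theta> V E w w1) - 1 \<le> int (mult \<theta> (V - {u}) (delete_vertex_edges E u) w w1)
       \<and> int (mult \<theta> (V - {u}) (delete_vertex_edges E u) w w1) \<le> int (mult \<theta> V E w w1) + 1"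
proof -
  have fin: "finite V" and c2: "\<forall>e\<in>E. card e = 2" using assms(1) by (auto simp: simple_graph_def)
  have eq: "eta_poly (V - {u}) (delete_vertex_edges E u) w w1 = eta_poly (V - {u}) E w w1"
    by (rule del_eq) simp
  show ?thesis using main[OF fin assms(3) c2, of \<theta> w w1] unfolding mult_def eq by linarith
qed

end
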